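(* Let $\mathbf A\in\mathbb R^{m\times n}$, $0\le\epsilon<1$, let $0\le s<\mathrm{rank}(\mathbf A)$ be an integer, $t_s=s+\mathrm{sr}_s(\mathbf A)$, and let $k$ be an integer with $s<k<t_s$. Define $\gamma_s(k)=\sqrt{1+\frac{2(k-s)}{t_s-k}}$ and $\Phi_s(k)=\big(1+\frac{s}{k-s}\big)\gamma_s(k)$. Let $\alpha=\frac{\gamma_s(k)\,\mathrm{OPT}_k}{(1-\epsilon)(k-s)}$ and $S\sim\mathrm{DPP}(\frac1\alpha\mathbf A^\top\mathbf A)$. Then \[ \frac{\mathbb E[\mathrm{Er}_{\mathbf A}(S)]}{\mathrm{OPT}_k}\le\frac{\Phi_s(k)}{1-\epsilon}\qquad\text{and}\qquad\mathbb E[|S|]\le k-\epsilon\,\frac{k-s}{\gamma_s(k)}. \]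
   Context: For $\mathbf A\in\mathbb R^{m\times n}$ with columns $\mathbf a_1,\dots,\mathbf a_n$ and $S\subseteq\{1,\dots,n\}$, $\mathbf P_S$ is the orthogonal projection onto $\mathrm{span}\{\mathbf a_i:i\in S\}$, $\mathrm{Er}_{\mathbf A}(S)=\|\mathbf A-\mathbf P_S\mathbf A\|_F^2$, and $\mathrm{OPT}_k=\min_{\mathrm{rank}(\mathbf B)=k}\|\mathbf A-\mathbf B\|_F^2=\sum_{i>k}\lambda_i$ where $\lambda_1\ge\lambda_2\ge\dots$ are the eigenvalues of $\mathbf A^\top\mathbf A$. Stable rank: $\mathrm{sr}_s(\mathbf A)=\lambda_{s+1}^{-1}\sum_{i>s}\lambda_i$. For a p.s.d. $n\times n$ matrix $\mathbf K$, $S\sim\mathrm{DPP}(\mathbf K)$ is the distribution over all subsets $S\subseteq\{1,\dots,n\}$ (of any size) with $\Pr(S)=\det(\mathbf K_{S,S})/\det(\mathbf I+\mathbf K)$, $\mathbf K_{S,S}$ the principal submatrix indexed by $S$ (empty determinant $=1$). *)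

theory Defs
  imports "HOL-Analysis.Analysis"
begin

text \<open>The paper's lambda_i (1-based) is sorted_eigs M (i - 1).\<close>
definition sorted_eigs :: "real^'n^'n \<Rightarrow> nat \<Rightarrow> real" where
  "sorted_eigs M = (SOME lam.
      (\<exists>v :: nat \<Rightarrow> real^'n.
          (\<forall>i < CARD('n). M *v v i = lam i *\<^sub>R v i) \<and>
          (\<forall>i < CARD('n). \<forall>j < CARD('n). v i \<bullet> v j = (if i = j then 1 else 0))) \<and>
      (\<forall>i j. i \<le> j \<longrightarrow> j < CARD('n) \<longrightarrow> lam j \<le> lam i) \<and>
      (\<forall>i \<ge> CARD('n). lam i = 0))"

definition eigsAtA :: "real^'n^'m \<Rightarrow> nat \<Rightarrow> real" where
  "eigsAtA A = sorted_eigs (transpose A ** A)"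

text \<open>OPT_k = sum_{i>k} lambda_i (1-based), i.e. 0-based indices k .. n-1.\<close>
definition OPT :: "real^'n^'m \<Rightarrow> nat \<Rightarrow> real" where
  "OPT A k = (\<Sum>i\<in>{k..<CARD('n)}. eigsAtA A i)"

definition stable_rank :: "real^'n^'m \<Rightarrow> nat \<Rightarrow> real" where
  "stable_rank A s = OPT A s / eigsAtA A s"

definition proj_onto :: "'a::real_inner set \<Rightarrow> 'a \<Rightarrow> 'a" where
  "proj_onto V x = (SOME p. p \<in> V \<and> (\<forall>v\<in>V. (x - p) \<bullet> v = 0))"

definition frob2 :: "real^'n^'m \<Rightarrow> real" where
  "frob2 M = (\<Sum>i\<in>UNIV. \<Sum>j\<in>UNIV. (M $ i $ j)^2)"

definition projS :: "real^'n^'m \<Rightarrow> 'n set \<Rightarrow> real^'n^'m" where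
  "projS A S = (\<chi> i j. proj_onto (span ((\<lambda>l. column l A) ` S)) (column j A) $ i)"

definition Er :: "real^'n^'m \<Rightarrow> 'n set \<Rightarrow> real" where
  "Er A S = frob2 (A - projS A S)"

definition pminor :: "real^'n^'n \<Rightarrow> 'n set \<Rightarrow> real" where
  "pminor K S = (\<Sum>p\<in>{p. p permutes S}. of_int (sign p) * (\<Prod>i\<in>S. K $ i $ p i))"

definition dpp_prob :: "real^'n^'n \<Rightarrow> 'n set \<Rightarrow> real" where
  "dpp_prob K S = pminor K S / det (mat 1 + K)"

definition dpp_expect :: "real^'n^'n \<Rightarrow> ('n set \<Rightarrow> real) \<Rightarrow> real" where
  "dpp_expect K f = (\<Sum>S\<in>(UNIV :: 'n set set). dpp_prob K S * f S)"

end

theory Submission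
  imports Defs
begin


lemma sym_inner:
  fixes M :: "real^'n^'n"
  assumes "transpose M = M"
  shows "x \<bullet> (M *v y) = (M *v x) \<bullet> y"
proof -
  have "x \<bullet> (M *v y) = (x v* M) \<bullet> y" by (simp add: dot_lmul_matrix)
  also have "x v* M = transpose M *v x" by simp
  finally show ?thesis using assms by simp
qed

lemma lin_quad_zero:
  fixes a b :: real
  assumes "\<And>t. a * t + b * t^2 \<le> 0"
  shows "a = 0"
proof (rule ccontr)
  assume a: "a \<noteq> 0"
  define t where "t = a / (2 * (\<bar>b\<bar> + 1))"
  have tpos: "\<bar>t\<bar> * \<bar>b\<bar> \<le> \<bar>a\<bar> / 2"
    unfolding t_def by (simp add: abs_divide field_simps)
  have "a * t + b * t^2 = t * (a + b * t)" by (simp add: power2_eq_square algebra_simps)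
  moreover have "t * (a + b * t) > 0"
  proof -
    have "a * t > 0" unfolding t_def using a by (simp add: field_simps) (smt (verit) mult_pos_pos not_square_less_zero zero_less_mult_iff)
    moreover have "\<bar>b * t * t\<bar> \<le> \<bar>a\<bar> / 2 * \<bar>t\<bar>" using tpos
    proof -
      have "\<bar>b * t * t\<bar> = (\<bar>t\<bar> * \<bar>b\<bar>) * \<bar>t\<bar>" by (simp add: abs_mult)
      also have "\<dots> \<le> \<bar>a\<bar> / 2 * \<bar>t\<bar>" by (rule mult_right_mono[OF tpos]) simp
      finally show ?thesis .
    qed
    moreover have "\<bar>a\<bar> * \<bar>t\<bar> = a * t" using \<open>a * t > 0\<close> by (simp add: abs_mult[symmetric])
    moreover have "t * (a + b * t) = a * t + b * t * t" by (simp add: algebra_simps)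
    moreover have "b * t * t \<ge> - \<bar>b * t * t\<bar>" by simp
    ultimately show ?thesis by linarith
  qed
  ultimately show False using assms[of t] by simp
qed

lemma quad_expand:
  fixes M :: "real^'n^'n"
  assumes "transpose M = M"
  shows "(x + t *\<^sub>R z) \<bullet> (M *v (x + t *\<^sub>R z)) =
     x \<bullet> (M *v x) + 2 * t * (z \<bullet> (M *v x)) + t^2 * (z \<bullet> (M *v z))"
proof -
  have "x \<bullet> (M *v z) = z \<bullet> (M *v x)" using sym_inner[OF assms, of x z] by (simp add: inner_commute)
  then show ?thesis
    by (simp add: matrix_vector_right_distrib matrix_vector_mult_scaleR inner_add_left inner_add_right
        power2_eq_square algebra_simps)
qed

lemma spectral_sub:
  fixes M :: "real^'n^'n"
  assumes sym: "transpose M = M"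
  shows "subspace V \<Longrightarrow> (\<forall>x\<in>V. M *v x \<in> V) \<Longrightarrow> dim V = d \<Longrightarrow>
    \<exists>lam v. (\<forall>i<d. v i \<in> V \<and> M *v v i = lam i *\<^sub>R v i) \<and>
      (\<forall>i<d. \<forall>j<d. v i \<bullet> v j = (if i = j then 1 else 0)) \<and>
      (\<forall>i j. i \<le> j \<longrightarrow> j < d \<longrightarrow> lam j \<le> (lam i :: real))"
proof (induction d arbitrary: V)
  case 0
  then show ?case by auto
next
  case (Suc d)
  note sV = Suc.prems(1) and inv = Suc.prems(2) and dV = Suc.prems(3)
  let ?S = "V \<inter> sphere 0 1"
  have "\<not> V \<subseteq> {0}" using dV dim_eq_0[of V] by auto
  then obtain y where y: "y \<in> V" "y \<noteq> 0" by auto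
  have "(1 / norm y) *\<^sub>R y \<in> ?S" using y sV by (simp add: subspace_scale)
  then have Sne: "?S \<noteq> {}" by blast
  have Scomp: "compact ?S"
    by (rule closed_Int_compact[OF closed_subspace[OF sV] compact_sphere])
  have cont: "continuous_on ?S (\<lambda>x. x \<bullet> (M *v x))"
    by (intro continuous_intros linear_continuous_on) (simp add: matrix_vector_mul_linear linear_linear)
  obtain x where xS: "x \<in> ?S" and xmax: "\<forall>y\<in>?S. y \<bullet> (M *v y) \<le> x \<bullet> (M *v x)"
    using continuous_attains_sup[OF Scomp Sne cont] by blast
  define \<mu> where "\<mu> = x \<bullet> (M *v x)"
  have xV: "x \<in> V" and xx: "x \<bullet> x = 1" using xS by (auto simp: dot_square_norm)
  have x0: "x \<noteq> 0" using xx by auto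
  have quad: "y \<bullet> (M *v y) \<le> \<mu> * (y \<bullet> y)" if "y \<in> V" for y
  proof (cases "y = 0")
    case True then show ?thesis by simp
  next
    case False
    let ?u = "(1 / norm y) *\<^sub>R y"
    have "?u \<in> ?S" using False that sV by (simp add: subspace_scale)
    then have "?u \<bullet> (M *v ?u) \<le> \<mu>" using xmax \<mu>_def by blast
    moreover have "?u \<bullet> (M *v ?u) = (y \<bullet> (M *v y)) / (y \<bullet> y)"
      by (simp add: matrix_vector_mult_scaleR dot_square_norm power2_eq_square)
    moreover have "y \<bullet> y > 0" using False by simp
    ultimately have "(y \<bullet> (M *v y)) / (y \<bullet> y) \<le> \<mu>" by linarith
    then show ?thesis using \<open>y \<bullet> y > 0\<close> by (simp add: pos_divide_le_eq)
  qed
  have eig: "M *v x = \<mu> *\<^sub>R x"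
  proof -
    define z where "z = M *v x - \<mu> *\<^sub>R x"
    have zV: "z \<in> V" unfolding z_def using inv xV sV by (simp add: subspace_diff subspace_scale)
    have zMx: "z \<bullet> (M *v x) - \<mu> * (x \<bullet> z) = z \<bullet> z"
      unfolding z_def by (simp add: inner_diff_left inner_diff_right inner_commute algebra_simps)
    have "(2 * (z \<bullet> z)) * t + (z \<bullet> (M *v z) - \<mu> * (z \<bullet> z)) * t^2 \<le> 0" for t
    proof -
      have "x + t *\<^sub>R z \<in> V" using xV zV sV by (simp add: subspace_add subspace_scale)
      from quad[OF this] have "(x + t *\<^sub>R z) \<bullet> (M *v (x + t *\<^sub>R z)) \<le> \<mu> * ((x + t *\<^sub>R z) \<bullet> (x + t *\<^sub>R z))" .
      also have "(x + t *\<^sub>R z) \<bullet> (x + t *\<^sub>R z) = 1 + 2 * t * (x \<bullet> z) + t^2 * (z \<bullet> z)"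
        using xx by (simp add: inner_add_left inner_add_right inner_commute power2_eq_square algebra_simps)
      finally show ?thesis unfolding quad_expand[OF sym] \<mu>_def[symmetric] using zMx
        by (simp add: algebra_simps)
    qed
    then have "2 * (z \<bullet> z) = 0" by (rule lin_quad_zero)
    then have "z = 0" by simp
    then show ?thesis unfolding z_def by simp
  qed
  define V' where "V' = V \<inter> {y. x \<bullet> y = 0}"
  have sV': "subspace V'" unfolding V'_def using sV subspace_hyperplane[of x] by (simp add: subspace_inter)
  have inv': "\<forall>y\<in>V'. M *v y \<in> V'"
  proof
    fix y assume "y \<in> V'"
    then have "y \<in> V" "x \<bullet> y = 0" unfolding V'_def by auto
    moreover have "x \<bullet> (M *v y) = \<mu> * (x \<bullet> y)" using sym_inner[OF sym, of x y] eig by simp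
    ultimately show "M *v y \<in> V'" unfolding V'_def using inv by auto
  qed
  have V'eq: "{y \<in> V. \<forall>w \<in> span {x}. orthogonal w y} = V'"
    unfolding V'_def orthogonal_def span_singleton
    by (auto simp: inner_scaleR_left)
  have "dim {y \<in> V. \<forall>w \<in> span {x}. orthogonal w y} + dim (span {x}) = dim V"
    by (rule dim_subspace_orthogonal_to_vectors) (use sV xV in \<open>auto simp: span_minimal\<close>)
  then have dV': "dim V' = d" using V'eq x0 dV by (simp add: dim_span)
  obtain lam' v' where
    e': "\<forall>i<d. v' i \<in> V' \<and> M *v v' i = lam' i *\<^sub>R v' i" and
    o': "\<forall>i<d. \<forall>j<d. v' i \<bullet> v' j = (if i = j then 1 else 0)" and
    s': "\<forall>i j. i \<le> j \<longrightarrow> j < d \<longrightarrow> lam' j \<le> (lam' i :: real)"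
    using Suc.IH[OF sV' inv' dV'] by blast
  have le\<mu>: "lam' i \<le> \<mu>" if "i < d" for i
  proof -
    have vi: "v' i \<in> V" "v' i \<bullet> v' i = 1" using e' o' that unfolding V'_def by auto
    have "lam' i = v' i \<bullet> (M *v v' i)" using e' that vi by simp
    also have "\<dots> \<le> \<mu>" using quad[OF vi(1)] vi(2) by simp
    finally show ?thesis .
  qed
  define lam where "lam i = (if i = 0 then \<mu> else lam' (i - 1))" for i
  define v where "v i = (if i = 0 then x else v' (i - 1))" for i
  have "\<forall>i<Suc d. v i \<in> V \<and> M *v v i = lam i *\<^sub>R v i"
    using e' xV eig unfolding v_def lam_def V'_def by auto
  moreover have "\<forall>i<Suc d. \<forall>j<Suc d. v i \<bullet> v j = (if i = j then 1 else 0)"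
  proof (intro allI impI)
    fix i j assume "i < Suc d" "j < Suc d"
    then show "v i \<bullet> v j = (if i = j then 1 else 0)"
      using o' e' xx unfolding v_def V'_def
      by (cases "i = 0"; cases "j = 0") (auto simp: inner_commute)
  qed
  moreover have "\<forall>i j. i \<le> j \<longrightarrow> j < Suc d \<longrightarrow> lam j \<le> lam i"
  proof (intro allI impI)
    fix i j assume "i \<le> j" "j < Suc d"
    then show "lam j \<le> lam i"
      using s' le\<mu> unfolding lam_def
      by (cases "i = 0"; cases "j = 0") auto
  qed
  ultimately show ?case by blast
qed



lemma perm_fix_iff:
  assumes "p permutes (UNIV :: 'n::finite set)"
  shows "p permutes T \<longleftrightarrow> (\<forall>x. x \<notin> T \<longrightarrow> p x = x)"
  using assms unfolding permutes_def by blast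

lemma sum_perms_restrict:
  fixes K :: "real^'n::finite^'n"
  shows "(\<Sum>p\<in>{p. p permutes (UNIV :: 'n set)}.
            (if p permutes T then of_int (sign p) * (\<Prod>i\<in>T. K $ i $ p i) else 0)) = pminor K T"
  unfolding pminor_def
proof (rule sum.mono_neutral_cong_right)
  show "finite {p. p permutes (UNIV :: 'n set)}" by (simp add: finite_permutations)
  show "{p. p permutes T} \<subseteq> {p. p permutes (UNIV :: 'n set)}" by (auto intro: permutes_subset)
qed auto

lemma det_restrict_pminor:
  fixes K :: "real^'n::finite^'n"
  shows "det (\<chi> i l. if i \<in> T \<and> l \<in> T then K $ i $ l else (if i = l then 1 else 0)) = pminor K T"
proof -
  let ?G = "(\<chi> i l. if i \<in> T \<and> l \<in> T then K $ i $ l else (if i = l then 1 else 0)) :: real^'n^'n"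
  have "of_int (sign p) * (\<Prod>i\<in>UNIV. ?G $ i $ p i) =
        (if p permutes T then of_int (sign p) * (\<Prod>i\<in>T. K $ i $ p i) else 0)"
    if p: "p permutes (UNIV :: 'n set)" for p
  proof (cases "p permutes T")
    case True
    have "(\<Prod>i\<in>UNIV. ?G $ i $ p i) = (\<Prod>i\<in>UNIV - T. ?G $ i $ p i) * (\<Prod>i\<in>T. ?G $ i $ p i)"
      by (rule prod.subset_diff) auto
    also have "(\<Prod>i\<in>UNIV - T. ?G $ i $ p i) = 1"
      using True perm_fix_iff[OF p] by (intro prod.neutral) auto
    also have "(\<Prod>i\<in>T. ?G $ i $ p i) = (\<Prod>i\<in>T. K $ i $ p i)"
      using permutes_in_image[OF True] by (intro prod.cong) auto
    finally show ?thesis using True by simp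
  next
    case False
    then obtain x where x: "x \<notin> T" "p x \<noteq> x" using perm_fix_iff[OF p] by blast
    have "(\<Prod>i\<in>UNIV. ?G $ i $ p i) = 0"
      by (rule prod_zero) (use x in auto)
    then show ?thesis using False by simp
  qed
  then have "det ?G = (\<Sum>p\<in>{p. p permutes (UNIV :: 'n set)}.
            (if p permutes T then of_int (sign p) * (\<Prod>i\<in>T. K $ i $ p i) else 0))"
    unfolding det_def by (intro sum.cong) auto
  then show ?thesis using sum_perms_restrict by simp
qed

lemma det_I_plus:
  fixes K :: "real^'n::finite^'n"
  shows "det (mat 1 + K) = (\<Sum>T\<in>(UNIV :: 'n set set). pminor K T)"
proof -
  have "of_int (sign p) * (\<Prod>i\<in>UNIV. (mat 1 + K) $ i $ p i) =
        (\<Sum>T\<in>UNIV. (if p permutes T then of_int (sign p) * (\<Prod>i\<in>T. K $ i $ p i) else 0))"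
    if p: "p permutes (UNIV :: 'n set)" for p
  proof -
    have "(\<Prod>i\<in>UNIV. (mat 1 + K) $ i $ p i) = (\<Prod>i\<in>UNIV. K $ i $ p i + (if i = p i then 1 else 0))"
      by (simp add: mat_def add.commute)
    also have "\<dots> = (\<Sum>X\<in>Pow UNIV. (\<Prod>i\<in>X. K $ i $ p i) * (\<Prod>i\<in>UNIV - X. (if i = p i then 1 else 0)))"
      by (rule prod_add) simp
    also have "\<dots> = (\<Sum>X\<in>UNIV. (if p permutes X then (\<Prod>i\<in>X. K $ i $ p i) else 0))"
    proof (intro sum.cong refl)
      fix X :: "'n set"
      show "(\<Prod>i\<in>X. K $ i $ p i) * (\<Prod>i\<in>UNIV - X. (if i = p i then 1 else 0)) =
            (if p permutes X then (\<Prod>i\<in>X. K $ i $ p i) else 0)"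
      proof (cases "p permutes X")
        case True
        then have "(\<Prod>i\<in>UNIV - X. (if i = p i then 1 else 0 :: real)) = 1"
          using perm_fix_iff[OF p] by (intro prod.neutral) auto
        then show ?thesis using True by simp
      next
        case False
        then obtain x where x: "x \<notin> X" "p x \<noteq> x" using perm_fix_iff[OF p] by blast
        have "(\<Prod>i\<in>UNIV - X. (if i = p i then 1 else 0 :: real)) = 0"
          by (rule prod_zero) (use x in \<open>auto intro!: bexI[of _ x]\<close>)
        then show ?thesis using False by simp
      qed
    qed simp
    finally have e: "(\<Prod>i\<in>UNIV. (mat 1 + K) $ i $ p i) = (\<Sum>X\<in>UNIV. (if p permutes X then (\<Prod>i\<in>X. K $ i $ p i) else 0))" .
    show ?thesis unfolding e sum_distrib_left by (intro sum.cong) auto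
  qed
  then have "det (mat 1 + K) = (\<Sum>p\<in>{p. p permutes (UNIV :: 'n set)}. \<Sum>T\<in>UNIV.
       (if p permutes T then of_int (sign p) * (\<Prod>i\<in>T. K $ i $ p i) else 0))"
    unfolding det_def by (intro sum.cong) auto
  also have "\<dots> = (\<Sum>T\<in>UNIV. \<Sum>p\<in>{p. p permutes (UNIV :: 'n set)}.
       (if p permutes T then of_int (sign p) * (\<Prod>i\<in>T. K $ i $ p i) else 0))"
    by (rule sum.swap)
  also have "\<dots> = (\<Sum>T\<in>UNIV. pminor K T)"
    by (intro sum.cong refl sum_perms_restrict)
  finally show ?thesis .
qed

lemma pminor_scale:
  fixes K :: "real^'n::finite^'n"
  shows "pminor (c *\<^sub>R K) T = c ^ card T * pminor K T"
  unfolding pminor_def sum_distrib_left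
  by (intro sum.cong refl) (simp add: prod.distrib prod_constant mult_ac)



definition gmat :: "('n::finite \<Rightarrow> real^'m) \<Rightarrow> 'n set \<Rightarrow> real^'n^'n" where
  "gmat w T = (\<chi> i l. if i \<in> T \<and> l \<in> T then w i \<bullet> w l else (if i = l then 1 else 0))"

lemma gmat_step:
  fixes w :: "'n::finite \<Rightarrow> real^'m"
  assumes "i \<in> U" "j \<in> U" "i \<noteq> j"
  shows "det (gmat (w(j := w j + c *\<^sub>R w i)) U) = det (gmat w U)"
proof -
  define w' where "w' = w(j := w j + c *\<^sub>R w i)"
  define G where "G = gmat w U"
  define H where "H = ((\<chi> a b. if a \<in> U \<and> b \<in> U then w' a \<bullet> w b else (if a = b then 1 else 0)) :: real^'n^'n)"
  have H1: "H = (\<chi> k. if k = j then row j G + c *s row i G else row k G)"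
    using assms unfolding H_def G_def gmat_def w'_def
    by (auto simp: vec_eq_iff row_def inner_add_left)
  have "det H = det G" unfolding H1 by (rule det_row_operation) (use assms in auto)
  moreover have "gmat w' U = (\<chi> k. if k = j then row j (transpose H) + c *s row i (transpose H) else row k (transpose H))"
    using assms unfolding H_def gmat_def w'_def
    by (auto simp: vec_eq_iff row_def transpose_def inner_add_left inner_add_right inner_commute)
  moreover have "det (\<chi> k. if k = j then row j (transpose H) + c *s row i (transpose H) else row k (transpose H)) = det (transpose H)"
    by (rule det_row_operation) (use assms in auto)
  ultimately show ?thesis unfolding w'_def G_def by simp
qed

lemma gmat_sum:
  fixes w :: "'n::finite \<Rightarrow> real^'m"
  assumes "j \<in> U" "F \<subseteq> U - {j}"
  shows "det (gmat (w(j := w j + (\<Sum>i\<in>F. c i *\<^sub>R w i))) U) = det (gmat w U)"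
proof -
  have "finite F" by simp
  then show ?thesis using assms(2)
  proof (induction F rule: finite_induct)
    case empty
    then show ?case by simp
  next
    case (insert i F)
    define w1 where "w1 = w(j := w j + (\<Sum>i\<in>F. c i *\<^sub>R w i))"
    have ij: "i \<noteq> j" "i \<in> U" using insert by auto
    have "w(j := w j + (\<Sum>i\<in>insert i F. c i *\<^sub>R w i)) = w1(j := w1 j + c i *\<^sub>R w1 i)"
      using insert ij unfolding w1_def by (simp add: fun_eq_iff add.assoc)
    then have "det (gmat (w(j := w j + (\<Sum>i\<in>insert i F. c i *\<^sub>R w i))) U) = det (gmat w1 U)"
      using gmat_step[OF ij(2) assms(1) ij(1)] by simp
    also have "\<dots> = det (gmat w U)" unfolding w1_def using insert.prems by (intro insert.IH) auto
    finally show ?case .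
  qed
qed

lemma span_image_sum:
  fixes w :: "'n::finite \<Rightarrow> real^'m"
  assumes "x \<in> span (w ` T)"
  shows "\<exists>c. x = (\<Sum>i\<in>T. c i *\<^sub>R w i)"
  using assms
proof (induction rule: span_induct)
  case base
  show ?case unfolding subspace_def
  proof (intro conjI ballI allI)
    show "0 \<in> Collect (\<lambda>x. \<exists>c. x = (\<Sum>i\<in>T. c i *\<^sub>R w i))"
      by (auto intro!: exI[of _ "\<lambda>_. 0"])
    fix x y assume "x \<in> Collect (\<lambda>x. \<exists>c. x = (\<Sum>i\<in>T. c i *\<^sub>R w i))" "y \<in> Collect (\<lambda>x. \<exists>c. x = (\<Sum>i\<in>T. c i *\<^sub>R w i))"
    then obtain c1 c2 where "x = (\<Sum>i\<in>T. c1 i *\<^sub>R w i)" "y = (\<Sum>i\<in>T. c2 i *\<^sub>R w i)" by auto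
    then show "x + y \<in> Collect (\<lambda>x. \<exists>c. x = (\<Sum>i\<in>T. c i *\<^sub>R w i))"
      by (auto intro!: exI[of _ "\<lambda>i. c1 i + c2 i"] simp: sum.distrib scaleR_add_left)
  next
    fix a :: real and x assume "x \<in> Collect (\<lambda>x. \<exists>c. x = (\<Sum>i\<in>T. c i *\<^sub>R w i))"
    then obtain c1 where "x = (\<Sum>i\<in>T. c1 i *\<^sub>R w i)" by auto
    then show "a *\<^sub>R x \<in> Collect (\<lambda>x. \<exists>c. x = (\<Sum>i\<in>T. c i *\<^sub>R w i))"
      by (auto intro!: exI[of _ "\<lambda>i. a * c1 i"] simp: scaleR_sum_right)
  qed
next
  case (step x)
  then obtain i where i: "i \<in> T" "x = w i" by auto
  have "(\<Sum>l\<in>T. (if l = i then 1 else 0) *\<^sub>R w l) = w i"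
  proof -
    have "(\<Sum>l\<in>T. (if l = i then 1 else 0) *\<^sub>R w l) = (\<Sum>l\<in>T. if l = i then w l else 0)"
      by (rule sum.cong) auto
    also have "\<dots> = w i" using i by simp
    finally show ?thesis .
  qed
  then show ?case using i by metis
qed

lemma gmat_insert:
  fixes w :: "'n::finite \<Rightarrow> real^'m"
  assumes jT: "j \<notin> T" and p: "p \<in> span (w ` T)" and orth: "\<forall>i\<in>T. (w j - p) \<bullet> w i = 0"
  shows "det (gmat w (insert j T)) = ((w j - p) \<bullet> (w j - p)) * det (gmat w T)"
proof -
  define r where "r = w j - p"
  obtain c where c: "p = (\<Sum>i\<in>T. c i *\<^sub>R w i)" using span_image_sum[OF p] by blast
  have "w(j := w j + (\<Sum>i\<in>T. (- c i) *\<^sub>R w i)) = w(j := r)"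
    unfolding r_def c by (simp add: sum_negf)
  moreover have "det (gmat (w(j := w j + (\<Sum>i\<in>T. (- c i) *\<^sub>R w i))) (insert j T)) = det (gmat w (insert j T))"
    by (rule gmat_sum) (use jT in auto)
  ultimately have e1: "det (gmat w (insert j T)) = det (gmat (w(j := r)) (insert j T))" by simp
  have orth': "\<forall>i\<in>T. r \<bullet> w i = 0" "\<forall>i\<in>T. w i \<bullet> r = 0" using orth unfolding r_def by (auto simp: inner_commute)
  have "gmat (w(j := r)) (insert j T) =
     (\<chi> k. if k = j then (r \<bullet> r) *s row k (gmat w T) else row k (gmat w T))"
  proof (rule vec_eq_iff[THEN iffD2], intro allI, rule vec_eq_iff[THEN iffD2], intro allI)
    fix k b
    show "gmat (w(j := r)) (insert j T) $ k $ b =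
      (\<chi> k. if k = j then (r \<bullet> r) *s row k (gmat w T) else row k (gmat w T)) $ k $ b"
      using jT orth' by (cases "k = j"; cases "b = j"; cases "k \<in> T"; cases "b \<in> T") (auto simp: gmat_def row_def)
  qed
  then have "det (gmat (w(j := r)) (insert j T)) = (r \<bullet> r) * det (\<chi> k. if k = j then row k (gmat w T) else row k (gmat w T))"
    by (simp only: det_row_mul[of j "r \<bullet> r" "\<lambda>k. row k (gmat w T)" "\<lambda>k. row k (gmat w T)"])
  also have "(\<chi> k. if k = j then row k (gmat w T) else row k (gmat w T)) = gmat w T"
    by (simp add: vec_eq_iff row_def)
  finally have X: "det (gmat (w(j := r)) (insert j T)) = (r \<bullet> r) * det (gmat w T)" .
  show ?thesis unfolding r_def[symmetric] using e1 X by linarith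
qed



lemma gram_entry:
  fixes A :: "real^'n::finite^'m::finite"
  shows "(transpose A ** A) $ i $ l = column i A \<bullet> column l A"
  by (simp add: matrix_matrix_mult_def transpose_def column_def inner_vec_def)

lemma gmat_pminor:
  fixes A :: "real^'n::finite^'m::finite"
  shows "det (gmat (\<lambda>l. column l A) T) = pminor (transpose A ** A) T"
proof -
  have "gmat (\<lambda>l. column l A) T =
     (\<chi> i l. if i \<in> T \<and> l \<in> T then (transpose A ** A) $ i $ l else (if i = l then 1 else 0))"
    unfolding gmat_def gram_entry ..
  then show ?thesis using det_restrict_pminor by simp
qed

lemma proj_props:
  fixes S :: "'a::euclidean_space set"
  shows "proj_onto (span S) x \<in> span S \<and> (\<forall>v\<in>span S. (x - proj_onto (span S) x) \<bullet> v = 0)"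
proof -
  obtain y z where "y \<in> span S" "\<And>w. w \<in> span S \<Longrightarrow> orthogonal z w" "x = y + z"
    using orthogonal_subspace_decomp_exists by blast
  then have "\<exists>p. p \<in> span S \<and> (\<forall>v\<in>span S. (x - p) \<bullet> v = 0)"
    by (intro exI[of _ y]) (auto simp: orthogonal_def)
  then show ?thesis unfolding proj_onto_def by (rule someI_ex)
qed

definition resid :: "real^'n::finite^'m::finite \<Rightarrow> 'n set \<Rightarrow> 'n \<Rightarrow> real^'m" where
  "resid A T j = column j A - proj_onto (span ((\<lambda>l. column l A) ` T)) (column j A)"

lemma Er_resid:
  fixes A :: "real^'n::finite^'m::finite"
  shows "Er A T = (\<Sum>j\<in>UNIV. resid A T j \<bullet> resid A T j)"
proof -
  have "Er A T = (\<Sum>i\<in>UNIV. \<Sum>j\<in>UNIV. (resid A T j $ i)^2)"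
    unfolding Er_def frob2_def resid_def projS_def
    by (simp add: column_def)
  also have "\<dots> = (\<Sum>j\<in>UNIV. \<Sum>i\<in>UNIV. (resid A T j $ i)^2)" by (rule sum.swap)
  also have "\<dots> = (\<Sum>j\<in>UNIV. resid A T j \<bullet> resid A T j)"
    by (simp add: inner_vec_def power2_eq_square)
  finally show ?thesis .
qed

lemma resid_in:
  fixes A :: "real^'n::finite^'m::finite"
  assumes "j \<in> T"
  shows "resid A T j = 0"
proof -
  let ?V = "span ((\<lambda>l. column l A) ` T)"
  have c: "column j A \<in> ?V" using assms by (intro span_base) auto
  have p: "proj_onto ?V (column j A) \<in> ?V" using proj_props by blast
  have r: "resid A T j \<in> ?V" unfolding resid_def using c p by (rule span_diff)
  have "resid A T j \<bullet> resid A T j = 0" using proj_props r unfolding resid_def by blast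
  then show ?thesis by simp
qed

lemma pminor_Er:
  fixes A :: "real^'n::finite^'m::finite"
  shows "pminor (transpose A ** A) T * Er A T = (\<Sum>j\<in>UNIV - T. pminor (transpose A ** A) (insert j T))"
proof -
  let ?M = "transpose A ** A"
  have "Er A T = (\<Sum>j\<in>UNIV - T. resid A T j \<bullet> resid A T j)"
    unfolding Er_resid by (rule sum.mono_neutral_right) (auto simp: resid_in)
  moreover have "pminor ?M T * (resid A T j \<bullet> resid A T j) = pminor ?M (insert j T)" if j: "j \<notin> T" for j
  proof -
    let ?V = "span ((\<lambda>l. column l A) ` T)"
    have "det (gmat (\<lambda>l. column l A) (insert j T)) =
       ((column j A - proj_onto ?V (column j A)) \<bullet> (column j A - proj_onto ?V (column j A))) * det (gmat (\<lambda>l. column l A) T)"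
    proof (rule gmat_insert[OF j])
      show "proj_onto ?V (column j A) \<in> span ((\<lambda>l. column l A) ` T)" using proj_props by blast
      show "\<forall>i\<in>T. (column j A - proj_onto ?V (column j A)) \<bullet> column i A = 0"
        using proj_props by (metis (no_types, lifting) image_eqI span_base)
    qed
    then show ?thesis unfolding gmat_pminor resid_def by simp
  qed
  ultimately show ?thesis by (simp add: sum_distrib_left)
qed



lemma sum_insert_reindex:
  fixes F :: "nat \<Rightarrow> 'n::finite set \<Rightarrow> real"
  shows "(\<Sum>T\<in>UNIV. \<Sum>j\<in>UNIV - T. F (card T) (insert j T)) =
         (\<Sum>U\<in>UNIV. of_nat (card U) * F (card U - 1) U)"
proof -
  have "(\<Sum>T\<in>UNIV. \<Sum>j\<in>UNIV - T. F (card T) (insert j T)) =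
        (\<Sum>(T, j)\<in>Sigma UNIV (\<lambda>T. UNIV - T). F (card T) (insert j T))"
    by (rule sum.Sigma) auto
  also have "\<dots> = (\<Sum>(U, j)\<in>Sigma UNIV (\<lambda>U. U). F (card U - 1) U)"
    by (rule sum.reindex_bij_witness[of _ "\<lambda>(U, j). (U - {j}, j)" "\<lambda>(T, j). (insert j T, j)"])
       (auto simp: insert_absorb)
  also have "\<dots> = (\<Sum>U\<in>UNIV. \<Sum>j\<in>U. F (card U - 1) U)"
    by (rule sum.Sigma[symmetric]) auto
  also have "\<dots> = (\<Sum>U\<in>UNIV. of_nat (card U) * F (card U - 1) U)"
    by simp
  finally show ?thesis .
qed

lemma Er_weighted:
  fixes A :: "real^'n::finite^'m::finite"
  shows "c * (\<Sum>T\<in>UNIV. pminor (c *\<^sub>R (transpose A ** A)) T * Er A T) =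
         (\<Sum>U\<in>UNIV. real (card U) * pminor (c *\<^sub>R (transpose A ** A)) U)"
proof -
  let ?M = "transpose A ** A"
  have "(\<Sum>T\<in>UNIV. pminor (c *\<^sub>R ?M) T * Er A T) =
        (\<Sum>T\<in>UNIV. \<Sum>j\<in>UNIV - T. c ^ card T * pminor ?M (insert j T))"
    by (intro sum.cong refl) (simp add: pminor_scale mult.assoc pminor_Er sum_distrib_left)
  also have "\<dots> = (\<Sum>U\<in>UNIV. of_nat (card U) * (c ^ (card U - 1) * pminor ?M U))"
    by (rule sum_insert_reindex[of "\<lambda>k U. c ^ k * pminor ?M U"])
  finally have e: "(\<Sum>T\<in>UNIV. pminor (c *\<^sub>R ?M) T * Er A T) =
      (\<Sum>U\<in>UNIV. of_nat (card U) * (c ^ (card U - 1) * pminor ?M U))" .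
  have h: "c * (of_nat (card U) * (c ^ (card U - 1) * pminor ?M U)) = real (card U) * pminor (c *\<^sub>R ?M) U" for U :: "'n set"
  proof (cases "card U")
    case 0 then show ?thesis by simp
  next
    case (Suc k) then show ?thesis by (simp add: pminor_scale)
  qed
  show ?thesis unfolding e sum_distrib_left by (intro sum.cong refl h)
qed

lemma dpp_Er_card:
  fixes A :: "real^'n::finite^'m::finite"
  shows "c * dpp_expect (c *\<^sub>R (transpose A ** A)) (Er A) =
         dpp_expect (c *\<^sub>R (transpose A ** A)) (\<lambda>S. real (card S))"
proof -
  let ?K = "c *\<^sub>R (transpose A ** A)"
  have "c * dpp_expect ?K (Er A) = (c * (\<Sum>T\<in>UNIV. pminor ?K T * Er A T)) / det (mat 1 + ?K)"
    unfolding dpp_expect_def dpp_prob_def by (simp add: sum_divide_distrib sum_distrib_left)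
  also have "\<dots> = (\<Sum>U\<in>UNIV. real (card U) * pminor ?K U) / det (mat 1 + ?K)"
    by (simp only: Er_weighted)
  also have "\<dots> = dpp_expect ?K (\<lambda>S. real (card S))"
    unfolding dpp_expect_def dpp_prob_def by (simp add: sum_divide_distrib mult.commute)
  finally show ?thesis .
qed



lemma sorted_eigs_spec:
  fixes M :: "real^'n::finite^'n"
  assumes sym: "transpose M = M"
  shows "(\<exists>v :: nat \<Rightarrow> real^'n.
          (\<forall>i < CARD('n). M *v v i = sorted_eigs M i *\<^sub>R v i) \<and>
          (\<forall>i < CARD('n). \<forall>j < CARD('n). v i \<bullet> v j = (if i = j then 1 else 0))) \<and>
      (\<forall>i j. i \<le> j \<longrightarrow> j < CARD('n) \<longrightarrow> sorted_eigs M j \<le> sorted_eigs M i) \<and>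
      (\<forall>i \<ge> CARD('n). sorted_eigs M i = 0)"
proof -
  have d: "dim (UNIV :: (real^'n) set) = CARD('n)" by simp
  obtain lam v where
    e: "\<forall>i<CARD('n). v i \<in> UNIV \<and> M *v v i = lam i *\<^sub>R v i" and
    o: "\<forall>i<CARD('n). \<forall>j<CARD('n). v i \<bullet> v j = (if i = j then 1 else 0)" and
    s: "\<forall>i j. i \<le> j \<longrightarrow> j < CARD('n) \<longrightarrow> lam j \<le> (lam i :: real)"
    using spectral_sub[OF sym subspace_UNIV _ d] by blast
  define lam2 where "lam2 i = (if i < CARD('n) then lam i else 0)" for i
  have "\<exists>lam. (\<exists>v :: nat \<Rightarrow> real^'n.
          (\<forall>i < CARD('n). M *v v i = lam i *\<^sub>R v i) \<and>
          (\<forall>i < CARD('n). \<forall>j < CARD('n). v i \<bullet> v j = (if i = j then 1 else 0))) \<and>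
      (\<forall>i j. i \<le> j \<longrightarrow> j < CARD('n) \<longrightarrow> lam j \<le> lam i) \<and>
      (\<forall>i \<ge> CARD('n). lam i = 0)"
    by (rule exI[of _ lam2], intro conjI exI[of _ v]) (use e o s in \<open>auto simp: lam2_def\<close>)
  then show ?thesis unfolding sorted_eigs_def by (rule someI_ex)
qed

lemma mat_mult_scaleR_right: "(A::real^'n::finite^'m::finite) ** (c *\<^sub>R (B::real^'k::finite^'n)) = c *\<^sub>R (A ** B)"
  by (simp add: vec_eq_iff matrix_matrix_mult_def sum_distrib_left algebra_simps)

lemma mat_mult_add_left: "((A::real^'n::finite^'m::finite) + B) ** (C::real^'k::finite^'n) = A ** C + B ** C"
  by (simp add: vec_eq_iff matrix_matrix_mult_def sum.distrib algebra_simps)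

lemma mat_mult_scaleR_left: "(c *\<^sub>R (A::real^'n::finite^'m::finite)) ** (B::real^'k::finite^'n) = c *\<^sub>R (A ** B)"
  by (simp add: vec_eq_iff matrix_matrix_mult_def sum_distrib_left algebra_simps)

lemma det_eig:
  fixes M :: "real^'n::finite^'n" and v :: "nat \<Rightarrow> real^'n"
  assumes eig: "\<forall>i < CARD('n). M *v v i = lam i *\<^sub>R v i"
    and orth: "\<forall>i < CARD('n). \<forall>j < CARD('n). v i \<bullet> v j = (if i = j then 1 else 0)"
  shows "det (mat 1 + s *\<^sub>R M) = (\<Prod>i<CARD('n). 1 + s * lam i)"
proof -
  obtain b :: "'n \<Rightarrow> nat" where b: "bij_betw b UNIV {0..<CARD('n)}"
    using ex_bij_betw_finite_nat[of "UNIV :: 'n set"] by auto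
  have bl: "b l < CARD('n)" for l using b by (auto simp: bij_betw_def)
  have binj: "b l = b l' \<longleftrightarrow> l = l'" for l l' using b by (auto simp: bij_betw_def inj_on_def)
  define Q where "Q = ((\<chi> i l. v (b l) $ i) :: real^'n^'n)"
  define D where "D = ((\<chi> i l. if i = l then lam (b i) else 0) :: real^'n^'n)"
  have QtQ: "transpose Q ** Q = mat 1"
  proof -
    have "(transpose Q ** Q) $ l $ l' = v (b l) \<bullet> v (b l')" for l l'
      by (simp add: Q_def matrix_matrix_mult_def transpose_def inner_vec_def)
    then show ?thesis using orth bl binj by (simp add: vec_eq_iff mat_def)
  qed
  then have QQt: "Q ** transpose Q = mat 1" using matrix_left_right_inverse by blast
  have MQ: "M ** Q = Q ** D"
  proof -
    have "(M ** Q) $ i $ l = (M *v v (b l)) $ i" for i l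
      by (simp add: Q_def matrix_matrix_mult_def matrix_vector_mult_def)
    moreover have "(Q ** D) $ i $ l = lam (b l) * v (b l) $ i" for i l
    proof -
      have "(Q ** D) $ i $ l = (\<Sum>k\<in>UNIV. v (b k) $ i * (if k = l then lam (b k) else 0))"
        unfolding Q_def D_def matrix_matrix_mult_def by simp
      also have "\<dots> = (\<Sum>k\<in>UNIV. if k = l then v (b l) $ i * lam (b l) else 0)"
        by (rule sum.cong) auto
      finally show ?thesis by simp
    qed
    ultimately show ?thesis using eig bl by (simp add: vec_eq_iff)
  qed
  have MM: "M = Q ** D ** transpose Q"
    by (metis MQ QQt matrix_mul_assoc matrix_mul_rid)
  have "mat 1 + s *\<^sub>R M = Q ** (mat 1 + s *\<^sub>R D) ** transpose Q"
    unfolding matrix_add_ldistrib mat_mult_add_left mat_mult_scaleR_right mat_mult_scaleR_left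
    by (simp add: QQt MM)
  then have e1: "det (mat 1 + s *\<^sub>R M) = (det Q * det (transpose Q)) * det (mat 1 + s *\<^sub>R D)"
    by (simp add: det_mul mult_ac)
  have e2: "det Q * det (transpose Q) = 1"
    using det_mul[of Q "transpose Q"] QQt by simp
  have "det (mat 1 + s *\<^sub>R D) = (\<Prod>l\<in>UNIV. 1 + s * lam (b l))"
    by (subst det_diagonal) (auto simp: D_def mat_def)
  also have "\<dots> = (\<Prod>i\<in>{0..<CARD('n)}. 1 + s * lam i)"
    by (rule prod.reindex_bij_betw[OF b])
  finally have e3: "det (mat 1 + s *\<^sub>R D) = (\<Prod>i<CARD('n). 1 + s * lam i)" by (simp add: atLeast0LessThan)
  show ?thesis using e1 e2 e3 by simp
qed



lemma expected_size:
  fixes M :: "real^'n::finite^'n" and v :: "nat \<Rightarrow> real^'n"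
  assumes eig: "\<forall>i < CARD('n). M *v v i = lam i *\<^sub>R v i"
    and orth: "\<forall>i < CARD('n). \<forall>j < CARD('n). v i \<bullet> v j = (if i = j then 1 else 0)"
    and pos: "\<forall>i < CARD('n). 1 + c * lam i > 0"
  shows "dpp_expect (c *\<^sub>R M) (\<lambda>S. real (card S)) = (\<Sum>i<CARD('n). c * lam i / (1 + c * lam i))"
proof -
  let ?K = "c *\<^sub>R M"
  define F1 where "F1 t = (\<Sum>U\<in>UNIV. t ^ card U * pminor ?K U)" for t :: real
  define F2 where "F2 t = (\<Prod>i<CARD('n). 1 + t * (c * lam i))" for t :: real
  have eq: "F1 t = F2 t" for t
  proof -
    have "F1 t = (\<Sum>U\<in>UNIV. pminor (t *\<^sub>R ?K) U)" unfolding F1_def by (simp only: pminor_scale[where c=t and K="?K"])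
    also have "\<dots> = det (mat 1 + t *\<^sub>R ?K)" by (rule det_I_plus[symmetric])
    also have "\<dots> = det (mat 1 + (t * c) *\<^sub>R M)" by simp
    also have "\<dots> = (\<Prod>i<CARD('n). 1 + (t * c) * lam i)" by (rule det_eig[OF eig orth])
    finally show ?thesis unfolding F2_def by (simp add: mult.assoc)
  qed
  have d1: "(F1 has_field_derivative (\<Sum>U\<in>UNIV. real (card U) * pminor ?K U)) (at 1)"
    unfolding F1_def by (auto intro!: derivative_eq_intros)
  have nz: "\<And>i. i \<in> {..<CARD('n)} \<Longrightarrow> 1 + 1 * (c * lam i) \<noteq> 0" using pos by fastforce
  have d2: "(F2 has_field_derivative (F2 1 * (\<Sum>i<CARD('n). (c * lam i) / (1 + 1 * (c * lam i))))) (at 1)"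
    unfolding F2_def
    by (rule has_field_derivative_prod'[of "{..<CARD('n)}" "\<lambda>i t. 1 + t * (c * lam i)" 1, OF nz])
       (auto intro!: derivative_eq_intros)
  have "F1 = F2" using eq by auto
  then have d1': "(F2 has_field_derivative (\<Sum>U\<in>UNIV. real (card U) * pminor ?K U)) (at 1)" using d1 by simp
  have sumeq: "(\<Sum>U\<in>UNIV. real (card U) * pminor ?K U) = F2 1 * (\<Sum>i<CARD('n). (c * lam i) / (1 + c * lam i))"
    using DERIV_unique[OF d1' d2] by simp
  have detK: "det (mat 1 + ?K) = F2 1"
    using det_I_plus[of ?K] eq[of 1] unfolding F1_def by simp
  have F2pos: "F2 1 > 0" unfolding F2_def using pos by (auto intro!: prod_pos)
  have "dpp_expect ?K (\<lambda>S. real (card S)) = (\<Sum>U\<in>UNIV. real (card U) * pminor ?K U) / det (mat 1 + ?K)"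
    unfolding dpp_expect_def dpp_prob_def by (simp add: sum_divide_distrib mult.commute)
  also have "\<dots> = (\<Sum>i<CARD('n). c * lam i / (1 + c * lam i))"
    unfolding sumeq detK using F2pos by simp
  finally show ?thesis .
qed



lemma analytic:
  fixes lam :: "nat \<Rightarrow> real" and n s k :: nat and \<epsilon> :: real
  assumes nn: "\<forall>i. 0 \<le> lam i" and srt: "\<forall>i j. i \<le> j \<longrightarrow> j < n \<longrightarrow> lam j \<le> lam i"
    and e0: "0 \<le> \<epsilon>" and e1: "\<epsilon> < 1" and sk: "s < k"
    and kt: "real k < real s + (\<Sum>i\<in>{s..<n}. lam i) / lam s"
  defines "t \<equiv> real s + (\<Sum>i\<in>{s..<n}. lam i) / lam s"
  defines "\<gamma> \<equiv> sqrt (1 + 2 * (real k - real s) / (t - real k))"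
  defines "\<alpha> \<equiv> \<gamma> * (\<Sum>i\<in>{k..<n}. lam i) / ((1 - \<epsilon>) * (real k - real s))"
  shows "\<alpha> > 0 \<and> (\<Sum>i<n. lam i / (lam i + \<alpha>)) \<le> real k - \<epsilon> * (real k - real s) / \<gamma>"
proof -
  define L where "L = lam s"
  define Ss where "Ss = (\<Sum>i\<in>{s..<n}. lam i)"
  define Ok where "Ok = (\<Sum>i\<in>{k..<n}. lam i)"
  have ks: "real k - real s > 0" using sk by simp
  have "Ss / L > 0" using kt sk unfolding Ss_def L_def by simp
  then have L0: "L \<noteq> 0" by auto
  then have Lpos: "L > 0" using nn[rule_format, of s] unfolding L_def by linarith
  have tdef: "t = real s + Ss / L" unfolding t_def Ss_def L_def ..
  have le_L: "lam i \<le> L" if "s \<le> i" "i < n" for i using srt that unfolding L_def by auto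
  have kn: "k < n"
  proof (rule ccontr)
    assume "\<not> k < n"
    then have "Ss \<le> (\<Sum>i\<in>{s..<n}. L)" unfolding Ss_def by (intro sum_mono le_L) auto
    also have "\<dots> = real (n - s) * L" by simp
    also have "\<dots> \<le> (real k - real s) * L" using \<open>\<not> k < n\<close> Lpos sk
      by (intro mult_right_mono) auto
    finally have "Ss / L \<le> real k - real s" using Lpos by (simp add: divide_le_eq)
    then show False using kt unfolding Ss_def L_def by simp
  qed
  have split1: "Ss = (\<Sum>i\<in>{s..<k}. lam i) + Ok"
    unfolding Ss_def Ok_def using sk kn by (simp add: sum.atLeastLessThan_concat)
  have "(\<Sum>i\<in>{s..<k}. lam i) \<le> (\<Sum>i\<in>{s..<k}. L)" using kn by (intro sum_mono le_L) auto
  then have "(\<Sum>i\<in>{s..<k}. lam i) \<le> (real k - real s) * L" using sk by (simp add: of_nat_diff)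
  moreover have tL: "t * L = real s * L + Ss" using tdef Lpos by (simp add: field_simps)
  ultimately have Okge: "Ok \<ge> (t - real k) * L"
    using split1 by (simp add: algebra_simps)
  have tk: "t - real k > 0" using kt unfolding t_def by simp
  define x where "x = (real k - real s) / (t - real k)"
  have xpos: "x > 0" unfolding x_def using ks tk by simp
  have g: "\<gamma> = sqrt (1 + 2 * x)" unfolding \<gamma>_def x_def by simp
  have g1: "\<gamma> \<ge> 1" unfolding g using xpos by simp
  have gsq: "\<gamma>^2 = 1 + 2 * x" unfolding g using xpos by simp
  have gle: "\<gamma> \<le> 1 + x"
  proof -
    have "(1 + 2 * x) \<le> (1 + x)^2" by (simp add: power2_eq_square algebra_simps)
    then have "sqrt (1 + 2 * x) \<le> sqrt ((1 + x)^2)" by (rule real_sqrt_le_mono)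
    then show ?thesis unfolding g using xpos by simp
  qed
  have ggx: "(\<gamma> - 1) * \<gamma> \<ge> x" using gsq gle by (simp add: power2_eq_square algebra_simps)
  have Okpos: "Ok > 0" using Okge tk Lpos by (smt (verit) mult_pos_pos)
  have adef: "\<alpha> = \<gamma> * Ok / ((1 - \<epsilon>) * (real k - real s))" unfolding \<alpha>_def Ok_def ..
  have apos: "\<alpha> > 0" unfolding adef using g1 Okpos e1 ks by simp
  have key: "L \<le> (\<gamma> - 1) * \<alpha>"
  proof -
    have "(\<gamma> - 1) * \<alpha> = (\<gamma> - 1) * \<gamma> * Ok / ((1 - \<epsilon>) * (real k - real s))" unfolding adef by simp
    also have "\<dots> \<ge> (\<gamma> - 1) * \<gamma> * Ok / (real k - real s)"
    proof -
      have "(\<gamma> - 1) * \<gamma> * Ok \<ge> 0" using g1 Okpos by simp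
      moreover have "(1 - \<epsilon>) * (real k - real s) \<le> real k - real s" using e0 ks
        by (simp add: algebra_simps mult_left_mono)
      moreover have "(1 - \<epsilon>) * (real k - real s) > 0" using e1 ks by simp
      ultimately show ?thesis by (intro divide_left_mono) auto
    qed
    also have "(\<gamma> - 1) * \<gamma> * Ok / (real k - real s) \<ge> x * ((t - real k) * L) / (real k - real s)"
      using ggx Okge xpos tk Lpos ks
      by (intro divide_right_mono mult_mono) auto
    also have "x * ((t - real k) * L) / (real k - real s) = L" unfolding x_def using tk ks by simp
    finally show ?thesis by simp
  qed
  have mono_frac: "lam i / (lam i + \<alpha>) \<le> L / (L + \<alpha>)" if "s \<le> i" "i < n" for i
  proof -
    have "lam i * (L + \<alpha>) \<le> L * (lam i + \<alpha>)" using le_L[OF that] apos by (simp add: algebra_simps)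
    moreover have "lam i + \<alpha> > 0" using apos nn[rule_format, of i] by linarith
    moreover have "L + \<alpha> > 0" using apos Lpos by linarith
    ultimately show ?thesis by (simp add: field_simps)
  qed
  have "(\<Sum>i<n. lam i / (lam i + \<alpha>)) = (\<Sum>i\<in>{0..<s}. lam i / (lam i + \<alpha>)) + (\<Sum>i\<in>{s..<k}. lam i / (lam i + \<alpha>))
       + (\<Sum>i\<in>{k..<n}. lam i / (lam i + \<alpha>))"
    using sk kn by (simp add: atLeast0LessThan[symmetric] sum.atLeastLessThan_concat)
  also have "(\<Sum>i\<in>{0..<s}. lam i / (lam i + \<alpha>)) \<le> (\<Sum>i\<in>{0..<s}. 1)"
  proof (intro sum_mono)
    fix i assume "i \<in> {0..<s}"
    have "lam i + \<alpha> > 0" "lam i \<le> lam i + \<alpha>" using apos nn[rule_format, of i] by linarith+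
    then show "lam i / (lam i + \<alpha>) \<le> 1" by simp
  qed
  also have "(\<Sum>i\<in>{s..<k}. lam i / (lam i + \<alpha>)) \<le> (\<Sum>i\<in>{s..<k}. L / (L + \<alpha>))"
    using kn by (intro sum_mono mono_frac) auto
  also have "(\<Sum>i\<in>{k..<n}. lam i / (lam i + \<alpha>)) \<le> (\<Sum>i\<in>{k..<n}. lam i / \<alpha>)"
  proof (intro sum_mono divide_left_mono)
    fix i assume "i \<in> {k..<n}"
    have "lam i + \<alpha> > 0" "0 \<le> lam i" using apos nn[rule_format, of i] by linarith+
    then show "0 \<le> lam i" "\<alpha> \<le> lam i + \<alpha>" "0 < (lam i + \<alpha>) * \<alpha>" using apos by auto
  qed
  also have "(\<Sum>i\<in>{k..<n}. lam i / \<alpha>) = Ok / \<alpha>" unfolding Ok_def by (simp add: sum_divide_distrib)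
  also have "Ok / \<alpha> = (1 - \<epsilon>) * (real k - real s) / \<gamma>" unfolding adef using Okpos g1 e1 ks by simp
  finally have "(\<Sum>i<n. lam i / (lam i + \<alpha>)) \<le> real s + (real k - real s) * (L / (L + \<alpha>)) + (1 - \<epsilon>) * (real k - real s) / \<gamma>"
    using sk by (simp add: of_nat_diff)
  also have "\<dots> \<le> real k - \<epsilon> * (real k - real s) / \<gamma>"
  proof -
    have "L / (L + \<alpha>) \<le> 1 - 1 / \<gamma>"
      using key g1 apos Lpos by (simp add: field_simps)
    then have "(real k - real s) * (L / (L + \<alpha>)) \<le> (real k - real s) * (1 - 1 / \<gamma>)"
      using ks by (intro mult_left_mono) auto
    moreover have "(real k - real s) * (1 - 1 / \<gamma>) = (real k - real s) - (real k - real s) / \<gamma>"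
      by (simp add: right_diff_distrib)
    moreover have "(1 - \<epsilon>) * (real k - real s) / \<gamma> = (1 - \<epsilon>) * ((real k - real s) / \<gamma>)" by simp
    moreover have "(1 - \<epsilon>) * ((real k - real s) / \<gamma>) = ((real k - real s) / \<gamma>) - \<epsilon> * ((real k - real s) / \<gamma>)"
      by (simp only: left_diff_distrib mult_1)
    moreover have "\<epsilon> * (real k - real s) / \<gamma> = \<epsilon> * ((real k - real s) / \<gamma>)" by simp
    ultimately show ?thesis by argo
  qed
  finally show ?thesis using apos by simp
qed



lemma inner_transpose_mv:
  fixes A :: "real^'n::finite^'m::finite"
  shows "x \<bullet> (transpose A *v y) = (A *v x) \<bullet> y"
proof -
  have "x \<bullet> (transpose A *v y) = x \<bullet> (y v* A)" by simp
  also have "\<dots> = (y v* A) \<bullet> x" by (rule inner_commute)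
  also have "\<dots> = y \<bullet> (A *v x)" by (rule dot_lmul_matrix)
  finally show ?thesis by (simp add: inner_commute)
qed

theorem lemma1:
  fixes A :: "real^'n^'m" and \<epsilon> :: real and s k :: nat
  assumes "0 \<le> \<epsilon>" and "\<epsilon> < 1"
    and "s < rank A"
    and "s < k" and "real k < real s + stable_rank A s"
  shows "let t = real s + stable_rank A s;
             \<gamma> = sqrt (1 + 2 * (real k - real s) / (t - real k));
             \<Phi> = (1 + real s / (real k - real s)) * \<gamma>;
             \<alpha> = \<gamma> * OPT A k / ((1 - \<epsilon>) * (real k - real s));
             K = (1 / \<alpha>) *\<^sub>R (transpose A ** A)
         in dpp_expect K (Er A) / OPT A k \<le> \<Phi> / (1 - \<epsilon>) \<and>
            dpp_expect K (\<lambda>S. real (card S)) \<le> real k - \<epsilon> * (real k - real s) / \<gamma>"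
proof -
  note e0 = assms(1) and e1 = assms(2) and sk = assms(4) and kt0 = assms(5)
  define M where "M = transpose A ** A"
  have sym: "transpose M = M" unfolding M_def by (simp add: matrix_transpose_mul)
  define lam where "lam = eigsAtA A"
  have lamM: "lam = sorted_eigs M" unfolding lam_def eigsAtA_def M_def ..
  obtain v where
    eig: "\<forall>i < CARD('n). M *v v i = lam i *\<^sub>R v i" and
    orth: "\<forall>i < CARD('n). \<forall>j < CARD('n). v i \<bullet> v j = (if i = j then 1 else 0)" and
    srt: "\<forall>i j. i \<le> j \<longrightarrow> j < CARD('n) \<longrightarrow> lam j \<le> lam i" and
    zero: "\<forall>i \<ge> CARD('n). lam i = 0"
    using sorted_eigs_spec[OF sym] unfolding lamM[symmetric] by blast
  have nn: "\<forall>i. 0 \<le> lam i"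
  proof
    fix i
    show "0 \<le> lam i"
    proof (cases "i < CARD('n)")
      case True
      have "lam i = v i \<bullet> (M *v v i)" using eig orth True by simp
      also have "\<dots> = (A *v v i) \<bullet> (A *v v i)"
        unfolding M_def matrix_vector_mul_assoc[symmetric] by (rule inner_transpose_mv)
      finally show ?thesis by simp
    next
      case False then show ?thesis using zero by simp
    qed
  qed
  have OPT_eq: "OPT A j = (\<Sum>i\<in>{j..<CARD('n)}. lam i)" for j unfolding OPT_def lam_def ..
  have sr: "stable_rank A s = (\<Sum>i\<in>{s..<CARD('n)}. lam i) / lam s"
    unfolding stable_rank_def OPT_eq lam_def ..
  define t where "t = real s + stable_rank A s"
  define \<gamma> where "\<gamma> = sqrt (1 + 2 * (real k - real s) / (t - real k))"
  define \<Phi> where "\<Phi> = (1 + real s / (real k - real s)) * \<gamma>"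
  define \<alpha> where "\<alpha> = \<gamma> * OPT A k / ((1 - \<epsilon>) * (real k - real s))"
  define K where "K = (1 / \<alpha>) *\<^sub>R (transpose A ** A)"
  have kt: "real k < real s + (\<Sum>i\<in>{s..<CARD('n)}. lam i) / lam s" using kt0 sr by simp
  have an: "\<alpha> > 0 \<and> (\<Sum>i<CARD('n). lam i / (lam i + \<alpha>)) \<le> real k - \<epsilon> * (real k - real s) / \<gamma>"
    using analytic[OF nn srt e0 e1 sk kt]
    unfolding \<alpha>_def \<gamma>_def t_def OPT_eq sr by simp
  then have apos: "\<alpha> > 0" and ESle: "(\<Sum>i<CARD('n). lam i / (lam i + \<alpha>)) \<le> real k - \<epsilon> * (real k - real s) / \<gamma>"
    by auto
  have ks: "real k - real s > 0" using sk by simp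
  have tk: "t - real k > 0" using kt0 unfolding t_def by simp
  have g1: "\<gamma> \<ge> 1" unfolding \<gamma>_def using ks tk by simp
  have ES: "dpp_expect K (\<lambda>S. real (card S)) = (\<Sum>i<CARD('n). lam i / (lam i + \<alpha>))"
  proof -
    have pos: "\<forall>i < CARD('n). 1 + (1 / \<alpha>) * lam i > 0"
      using nn apos by (simp add: add_pos_nonneg)
    have "dpp_expect K (\<lambda>S. real (card S)) = (\<Sum>i<CARD('n). (1 / \<alpha>) * lam i / (1 + (1 / \<alpha>) * lam i))"
      unfolding K_def M_def[symmetric] by (rule expected_size[OF eig orth pos])
    also have "\<dots> = (\<Sum>i<CARD('n). lam i / (lam i + \<alpha>))"
    proof (rule sum.cong[OF refl])
      fix i
      have "lam i + \<alpha> > 0" using nn apos by (simp add: add_nonneg_pos)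
      then show "(1 / \<alpha>) * lam i / (1 + (1 / \<alpha>) * lam i) = lam i / (lam i + \<alpha>)"
        using apos by (simp add: field_simps)
    qed
    finally show ?thesis .
  qed
  have EEr: "dpp_expect K (Er A) = \<alpha> * dpp_expect K (\<lambda>S. real (card S))"
  proof -
    have "(1 / \<alpha>) * dpp_expect K (Er A) = dpp_expect K (\<lambda>S. real (card S))"
      unfolding K_def by (rule dpp_Er_card)
    then show ?thesis using apos by (simp add: field_simps)
  qed
  have OPTpos: "OPT A k > 0"
  proof -
    have "(1 - \<epsilon>) * (real k - real s) > 0" using e1 ks by simp
    then have "\<gamma> * OPT A k = \<alpha> * ((1 - \<epsilon>) * (real k - real s))" unfolding \<alpha>_def
      by (simp add: field_simps)
    also have "\<dots> > 0" using apos \<open>(1 - \<epsilon>) * (real k - real s) > 0\<close> by simp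
    finally have "\<gamma> * OPT A k > 0" .
    then show ?thesis using g1 by (simp add: zero_less_mult_iff)
  qed
  have ESk: "dpp_expect K (\<lambda>S. real (card S)) \<le> real k"
  proof -
    have "\<epsilon> * (real k - real s) / \<gamma> \<ge> 0" using e0 ks g1 by simp
    then show ?thesis using ES ESle by linarith
  qed
  have I1: "dpp_expect K (Er A) / OPT A k \<le> \<Phi> / (1 - \<epsilon>)"
  proof -
    have "dpp_expect K (Er A) / OPT A k \<le> \<alpha> * real k / OPT A k"
      unfolding EEr using ESk apos OPTpos by (intro divide_right_mono mult_left_mono) auto
    also have "\<alpha> * real k / OPT A k = \<Phi> / (1 - \<epsilon>)"
    proof -
      have h1: "1 + real s / (real k - real s) = real k / (real k - real s)" using ks by (simp add: field_simps)
      obtain Oo d where Od: "Oo = OPT A k" "d = (1 - \<epsilon>) * (real k - real s)" by blast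
      have dpos: "d > 0" using Od e1 ks by simp
      have "\<alpha> * real k / OPT A k = \<gamma> * real k / d"
        unfolding \<alpha>_def Od(2)[symmetric] Od(1)[symmetric] using dpos OPTpos Od(1) by (simp add: field_simps)
      also have "\<dots> = \<Phi> / (1 - \<epsilon>)" unfolding \<Phi>_def h1 Od(2) using ks e1 by (simp add: field_simps)
      finally show ?thesis .
    qed
    finally show ?thesis .
  qed
  have I2: "dpp_expect K (\<lambda>S. real (card S)) \<le> real k - \<epsilon> * (real k - real s) / \<gamma>"
    using ES ESle by simp
  show ?thesis unfolding Let_def using I1 I2 unfolding K_def \<alpha>_def \<Phi>_def \<gamma>_def t_def by simp
qed

end
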